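(* Let $C\subseteq[n]$ (viewed as a single column of boxes of $[n]^2$, with a box in row $i$ for each $i\in C$), and let $r_C$ be the rank function of the Schubert matroid $SM_n(C)$. Let $S$ be a $k$-subset of $[n]$ and let $\pi=\pi_1\pi_2\cdots\pi_k$ be any ordering of the elements of $S$. Then \[r_C(S)=|\mathcal{F}_\pi(C)|.\]
   Context: For $T=\{a_1<\cdots<a_k\}$ and $S=\{b_1<\cdots<b_k\}$ subsets of $[n]$, write $T\le S$ if $\#T=\#S$ and $a_i\le b_i$ for all $i$. The Schubert matroid $SM_n(C)$ is the matroid on $[n]$ whose bases are $\{T\subseteq[n]\colon T\le C\}$; its rank function is $r_C(A)=\max\{\#(A\cap B)\colon B\text{ a basis}\}$. The filling $\mathcal{F}_\pi(C)$: starting with all boxes of $C$ empty, for $t=1,\ldots,k$ in turn place $\pi_t$ into the topmost still-empty box of $C$ whose row index is $\ge\pi_t$; if no such box exists, skip $\pi_t$. $|\mathcal{F}|$ denotes the number of nonempty boxes of a filling $\mathcal{F}$. *)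

theory Defs
  imports Main
begin

definition gale_le :: "nat set \<Rightarrow> nat set \<Rightarrow> bool" where
  "gale_le T S \<longleftrightarrow> card T = card S \<and>
     (\<forall>i < card T. sorted_list_of_set T ! i \<le> sorted_list_of_set S ! i)"

definition schubert_bases :: "nat \<Rightarrow> nat set \<Rightarrow> nat set set" where
  "schubert_bases n C = {T. T \<subseteq> {1..n} \<and> gale_le T C}"

definition schubert_rank :: "nat \<Rightarrow> nat set \<Rightarrow> nat set \<Rightarrow> nat" where
  "schubert_rank n C A = Max ((\<lambda>B. card (A \<inter> B)) ` schubert_bases n C)"

(* A filling of the column C: a partial map from row indices (boxes of C) to entries. *)
definition fill_step :: "nat set \<Rightarrow> (nat \<Rightarrow> nat option) \<Rightarrow> nat \<Rightarrow> (nat \<Rightarrow> nat option)" where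
  "fill_step C F x =
     (let R = {i \<in> C. F i = None \<and> x \<le> i} in
      if R = {} then F else F(Min R \<mapsto> x))"

definition filling :: "nat set \<Rightarrow> nat list \<Rightarrow> (nat \<Rightarrow> nat option)" where
  "filling C \<pi> = foldl (fill_step C) Map.empty \<pi>"

definition filling_size :: "(nat \<Rightarrow> nat option) \<Rightarrow> nat" where
  "filling_size F = card (dom F)"

end

theory Submission
  imports Defs
begin

lemma card_filter_nth:
  assumes "distinct xs"
  shows "card {x \<in> set xs. P x} = card {i. i < length xs \<and> P (xs!i)}"
proof -
  have "{x \<in> set xs. P x} = (nth xs) ` {i. i < length xs \<and> P (xs!i)}"
    by (auto simp: in_set_conv_nth)
  moreover have "inj_on (nth xs) {i. i < length xs \<and> P (xs!i)}"
    using assms by (simp add: inj_on_def nth_eq_iff_index_eq)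
  ultimately show ?thesis by (simp add: card_image)
qed

lemma card_split:
  assumes "finite A"
  shows "card {x\<in>A. P x} + card {x\<in>A. \<not> P x} = card A"
proof -
  have "A = {x\<in>A. P x} \<union> {x\<in>A. \<not> P x}" by auto
  then have "card A = card ({x\<in>A. P x} \<union> {x\<in>A. \<not> P x})" by simp
  also have "\<dots> = card {x\<in>A. P x} + card {x\<in>A. \<not> P x}"
    by (rule card_Un_disjoint) (use assms in auto)
  finally show ?thesis by simp
qed

lemma gale_count:
  fixes T S :: "nat set"
  assumes fin: "finite T" "finite S" and cd: "card T = card S"
  shows "gale_le T S \<longleftrightarrow> (\<forall>t. card {x\<in>T. t \<le> x} \<le> card {x\<in>S. t \<le> x})"
proof -
  define ts where "ts = sorted_list_of_set T"
  define ss where "ss = sorted_list_of_set S"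
  have lts: "length ts = card T" and lss: "length ss = card T"
    using cd by (simp_all add: ts_def ss_def)
  have sts: "set ts = T" "sorted ts" "distinct ts" using fin by (simp_all add: ts_def)
  have sss: "set ss = S" "sorted ss" "distinct ss" using fin by (simp_all add: ss_def)
  have cT: "card {x\<in>T. t \<le> x} = card {i. i < card T \<and> t \<le> ts!i}" for t
    using card_filter_nth[OF sts(3), of "\<lambda>x. t \<le> x"] sts(1) lts by simp
  have cS: "card {x\<in>S. t \<le> x} = card {i. i < card T \<and> t \<le> ss!i}" for t
    using card_filter_nth[OF sss(3), of "\<lambda>x. t \<le> x"] sss(1) lss by simp
  show ?thesis
  proof
    assume g: "gale_le T S"
    then have le: "\<forall>i<card T. ts!i \<le> ss!i" by (simp add: gale_le_def ts_def ss_def)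
    show "\<forall>t. card {x\<in>T. t \<le> x} \<le> card {x\<in>S. t \<le> x}"
    proof
      fix t
      have "{i. i < card T \<and> t \<le> ts!i} \<subseteq> {i. i < card T \<and> t \<le> ss!i}"
        using le by (auto intro: order_trans)
      then have "card {i. i < card T \<and> t \<le> ts!i} \<le> card {i. i < card T \<and> t \<le> ss!i}"
        by (rule card_mono[rotated]) simp
      then show "card {x\<in>T. t \<le> x} \<le> card {x\<in>S. t \<le> x}" using cT cS by simp
    qed
  next
    assume c: "\<forall>t. card {x\<in>T. t \<le> x} \<le> card {x\<in>S. t \<le> x}"
    have "ts!i \<le> ss!i" if i: "i < card T" for i
    proof (rule ccontr)
      assume "\<not> ts!i \<le> ss!i"
      then have lt: "ss!i < ts!i" by simp
      define t where "t = ts!i"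
      have "{i..<card T} \<subseteq> {j. j < card T \<and> t \<le> ts!j}"
        using sts(2) lts by (auto simp: t_def intro: sorted_nth_mono)
      then have a: "card T - i \<le> card {j. j < card T \<and> t \<le> ts!j}"
        by (metis card_atLeastLessThan card_mono finite_Collect_conjI finite_Collect_less_nat)
      have "{j. j < card T \<and> t \<le> ss!j} \<subseteq> {Suc i..<card T}"
      proof
        fix j assume j: "j \<in> {j. j < card T \<and> t \<le> ss!j}"
        have "\<not> j \<le> i"
        proof
          assume "j \<le> i"
          then have "ss!j \<le> ss!i" using sss(2) lss i by (auto intro: sorted_nth_mono)
          then show False using j lt t_def by simp
        qed
        then show "j \<in> {Suc i..<card T}" using j by auto
      qed
      then have b: "card {j. j < card T \<and> t \<le> ss!j} \<le> card T - Suc i"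
        by (metis card_atLeastLessThan card_mono finite_atLeastLessThan)
      have "card {j. j < card T \<and> t \<le> ts!j} \<le> card {j. j < card T \<and> t \<le> ss!j}"
        using c cT cS by metis
      with a b i show False by linarith
    qed
    then show "gale_le T S" using cd by (simp add: gale_le_def ts_def ss_def)
  qed
qed


definition finv :: "nat set \<Rightarrow> nat list \<Rightarrow> (nat \<Rightarrow> nat option) \<Rightarrow> bool" where
  "finv C xs F \<longleftrightarrow>
     (\<forall>i x. F i = Some x \<longrightarrow> i \<in> C \<and> x \<le> i \<and> x \<in> set xs) \<and>
     (\<forall>i j x. F i = Some x \<longrightarrow> F j = Some x \<longrightarrow> i = j) \<and>
     (\<forall>x\<in>set xs. \<forall>e\<in>C. F e = None \<longrightarrow> x \<le> e \<longrightarrow> (\<exists>i\<le>e. F i = Some x))"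

lemma filling_inv:
  assumes "finite C" "distinct xs"
  shows "finv C xs (filling C xs)"
  using assms(2)
proof (induction xs rule: rev_induct)
  case Nil
  then show ?case by (simp add: finv_def filling_def)
next
  case (snoc x xs)
  define F where "F = filling C xs"
  have IH: "finv C xs F" using snoc by (simp add: F_def)
  have xn: "x \<notin> set xs" using snoc.prems by simp
  have eq: "filling C (xs @ [x]) = fill_step C F x" by (simp add: filling_def F_def)
  define R where "R = {i \<in> C. F i = None \<and> x \<le> i}"
  show ?case
  proof (cases "R = {}")
    case True
    then have "filling C (xs @ [x]) = F" by (simp add: eq fill_step_def R_def)
    moreover have "finv C (xs @ [x]) F"
      using IH True unfolding finv_def R_def by auto
    ultimately show ?thesis by simp
  next
    case False
    define m where "m = Min R"
    have fR: "finite R" using assms(1) by (simp add: R_def)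
    have mR: "m \<in> R" using False fR by (simp add: m_def)
    have mle: "m \<le> e" if "e \<in> R" for e using fR that by (simp add: m_def)
    have e2: "filling C (xs @ [x]) = F(m \<mapsto> x)"
    proof -
      have "fill_step C F x = (if R = {} then F else F(Min R \<mapsto> x))"
        by (simp only: fill_step_def Let_def R_def)
      then show ?thesis using False by (simp add: eq m_def)
    qed
    have Fm: "F m = None" using mR by (simp add: R_def)
    have c1: "\<forall>i y. (F(m \<mapsto> x)) i = Some y \<longrightarrow> i \<in> C \<and> y \<le> i \<and> y \<in> set (xs @ [x])"
    proof (intro allI impI)
      fix i y assume "(F(m \<mapsto> x)) i = Some y"
      then show "i \<in> C \<and> y \<le> i \<and> y \<in> set (xs @ [x])"
        using IH mR unfolding finv_def R_def by (auto split: if_splits)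
    qed
    have c2: "\<forall>i j y. (F(m \<mapsto> x)) i = Some y \<longrightarrow> (F(m \<mapsto> x)) j = Some y \<longrightarrow> i = j"
    proof (intro allI impI)
      fix i j y assume a: "(F(m \<mapsto> x)) i = Some y" "(F(m \<mapsto> x)) j = Some y"
      have nx: "F i \<noteq> Some x" for i using IH xn unfolding finv_def by blast
      show "i = j" using a IH nx unfolding finv_def by (auto split: if_splits)
    qed
    have c3: "\<forall>y\<in>set (xs @ [x]). \<forall>e\<in>C. (F(m \<mapsto> x)) e = None \<longrightarrow> y \<le> e \<longrightarrow> (\<exists>i\<le>e. (F(m \<mapsto> x)) i = Some y)"
    proof (intro ballI impI)
      fix y e assume y: "y \<in> set (xs @ [x])" and e: "e \<in> C"
        and n: "(F(m \<mapsto> x)) e = None" and ye: "y \<le> e"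
      show "\<exists>i\<le>e. (F(m \<mapsto> x)) i = Some y"
      proof (cases "y = x")
        case True
        have "e \<in> R" using e n ye True by (auto simp: R_def split: if_splits)
        then show ?thesis using mle True by (intro exI[of _ m]) auto
      next
        case False
        then have "y \<in> set xs" using y by simp
        moreover have "F e = None" "e \<noteq> m" using n by (auto split: if_splits)
        ultimately obtain i where "i \<le> e" "F i = Some y"
          using IH e ye unfolding finv_def by blast
        then show ?thesis using Fm by (intro exI[of _ i]) auto
      qed
    qed
    have "finv C (xs @ [x]) (F(m \<mapsto> x))"
      using c1 c2 c3 unfolding finv_def by blast
    then show ?thesis using e2 by metis
  qed
qed

lemma ivt_nat:
  fixes f :: "nat \<Rightarrow> nat"
  assumes "f 0 \<le> k" "k \<le> f N" "\<And>s. f (Suc s) \<le> Suc (f s)"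
  shows "\<exists>s\<le>N. f s = k"
  using assms(2)
proof (induction N)
  case 0 then show ?case using assms(1) by auto
next
  case (Suc N)
  show ?case
  proof (cases "k \<le> f N")
    case True then show ?thesis using Suc.IH by (meson le_Suc_eq)
  next
    case False then have "k = f (Suc N)" using Suc.prems assms(3)[of N] by linarith
    then show ?thesis by auto
  qed
qed


theorem theorem3p3:
  fixes n k :: nat and C S :: "nat set" and \<pi> :: "nat list"
  assumes "C \<subseteq> {1..n}"
    and "S \<subseteq> {1..n}" and "card S = k"
    and "distinct \<pi>" and "set \<pi> = S"
  shows "schubert_rank n C S = filling_size (filling C \<pi>)"
proof -
  have fC: "finite C" using assms(1) finite_subset by blast
  have fS: "finite S" using assms(2) finite_subset by blast
  define F where "F = filling C \<pi>"
  have inv: "finv C \<pi> F" using filling_inv[OF fC assms(4)] by (simp add: F_def)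
  define U where "U = dom F"
  define val where "val i = the (F i)" for i
  have i1: "F i = Some x \<Longrightarrow> i \<in> C \<and> x \<le> i \<and> x \<in> S" for i x
    using inv assms(5) unfolding finv_def by blast
  have i2: "F i = Some x \<Longrightarrow> F j = Some x \<Longrightarrow> i = j" for i j x
    using inv unfolding finv_def by blast
  have i3: "x \<in> S \<Longrightarrow> e \<in> C \<Longrightarrow> F e = None \<Longrightarrow> x \<le> e \<Longrightarrow> \<exists>i\<le>e. F i = Some x" for x e
    using inv assms(5) unfolding finv_def by blast
  have vp: "F i = Some (val i)" "i \<in> C" "val i \<le> i" "val i \<in> S" if "i \<in> U" for i
    using that i1 by (auto simp: U_def val_def)
  have UC: "U \<subseteq> C" using vp by blast
  have fU: "finite U" using UC fC finite_subset by blast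
  have injv: "inj_on val U"
    by (rule inj_onI) (metis vp(1) i2)
  define t0 where "t0 = (LEAST t. {c\<in>C. t \<le> c} \<subseteq> U)"
  have ex: "{c\<in>C. Suc n \<le> c} \<subseteq> U" using assms(1) by auto
  have hL: "{c\<in>C. t0 \<le> c} \<subseteq> U" unfolding t0_def by (rule LeastI[of _ "Suc n"]) (rule ex)
  have low: "card {i\<in>U. \<not> t0 \<le> i} = card {x\<in>S. \<not> t0 \<le> x}"
  proof (rule antisym)
    have sub: "val ` {i\<in>U. \<not> t0 \<le> i} \<subseteq> {x\<in>S. \<not> t0 \<le> x}"
    proof (rule image_subsetI)
      fix i assume "i \<in> {i\<in>U. \<not> t0 \<le> i}"
      then show "val i \<in> {x\<in>S. \<not> t0 \<le> x}" using vp[of i] by auto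
    qed
    have inj: "inj_on val {i\<in>U. \<not> t0 \<le> i}" using injv by (rule inj_on_subset) auto
    show "card {i\<in>U. \<not> t0 \<le> i} \<le> card {x\<in>S. \<not> t0 \<le> x}"
      using card_inj_on_le[OF inj sub] fS by simp
  next
    have "{x\<in>S. \<not> t0 \<le> x} \<subseteq> val ` {i\<in>U. \<not> t0 \<le> i}"
    proof
      fix x assume x: "x \<in> {x\<in>S. \<not> t0 \<le> x}"
      then have t0p: "t0 > 0" by auto
      have nl: "\<And>m. m < t0 \<Longrightarrow> \<not> {c\<in>C. m \<le> c} \<subseteq> U"
        unfolding t0_def by (rule not_less_Least)
      have "\<not> {c\<in>C. t0 - 1 \<le> c} \<subseteq> U" using t0p by (intro nl) simp
      then obtain c where c: "c \<in> C" "t0 - 1 \<le> c" "c \<notin> U" by blast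
      have "c < t0"
      proof (rule ccontr)
        assume "\<not> c < t0"
        then have "c \<in> {c\<in>C. t0 \<le> c}" using c by simp
        with hL c show False by blast
      qed
      then have "x \<le> c" using x c t0p by auto
      moreover have "F c = None" using c by (auto simp: U_def)
      ultimately obtain i where "i \<le> c" "F i = Some x" using i3 x c by blast
      then have "i \<in> {i\<in>U. \<not> t0 \<le> i}" "val i = x" using \<open>c < t0\<close>
        by (auto simp: U_def val_def)
      then show "x \<in> val ` {i\<in>U. \<not> t0 \<le> i}" by blast
    qed
    then have "card {x\<in>S. \<not> t0 \<le> x} \<le> card (val ` {i\<in>U. \<not> t0 \<le> i})"
      by (rule card_mono[rotated]) (use fU in simp)
    also have "\<dots> \<le> card {i\<in>U. \<not> t0 \<le> i}" by (rule card_image_le) (use fU in simp)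
    finally show "card {x\<in>S. \<not> t0 \<le> x} \<le> card {i\<in>U. \<not> t0 \<le> i}" .
  qed
  have up: "{i\<in>U. t0 \<le> i} = {c\<in>C. t0 \<le> c}" using hL UC by blast
  have key: "card U = card {x\<in>S. \<not> t0 \<le> x} + card {c\<in>C. t0 \<le> c}"
    using card_split[OF fU, of "\<lambda>i. t0 \<le> i"] low up by simp
  have fB: "finite (schubert_bases n C)"
    by (rule finite_subset[of _ "Pow {1..n}"]) (auto simp: schubert_bases_def)
  have upper: "card (S \<inter> B) \<le> card U" if B: "B \<in> schubert_bases n C" for B
  proof -
    have Bn: "B \<subseteq> {1..n}" and g: "gale_le B C" using B by (auto simp: schubert_bases_def)
    have fBB: "finite B" using Bn finite_subset by blast
    have "card B = card C" using g by (simp add: gale_le_def)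
    then have c1: "card {x\<in>B. t0 \<le> x} \<le> card {c\<in>C. t0 \<le> c}"
      using gale_count[OF fBB fC] g by blast
    have "card (S \<inter> B) = card {x\<in>S \<inter> B. t0 \<le> x} + card {x\<in>S \<inter> B. \<not> t0 \<le> x}"
      using card_split[of "S \<inter> B"] fS by simp
    also have "card {x\<in>S \<inter> B. t0 \<le> x} \<le> card {x\<in>B. t0 \<le> x}"
      by (rule card_mono) (use fBB in auto)
    also have "card {x\<in>S \<inter> B. \<not> t0 \<le> x} \<le> card {x\<in>S. \<not> t0 \<le> x}"
      by (rule card_mono) (use fS in auto)
    finally show ?thesis using c1 key by linarith
  qed
  define M where "M = val ` U"
  have cM: "card M = card U" using injv by (simp add: M_def card_image)
  have MS: "M \<subseteq> S" using vp M_def by blast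
  have fM: "finite M" using fU M_def by simp
  define g where "g s = card (M \<union> {1..s})" for s
  have g0: "g 0 \<le> card C" using cM card_mono[OF fC UC] by (simp add: g_def)
  have gn: "card C \<le> g n"
  proof -
    have "M \<union> {1..n} = {1..n}" using MS assms(2) by blast
    then show ?thesis using card_mono[OF _ assms(1)] by (simp add: g_def)
  qed
  have gs: "g (Suc s) \<le> Suc (g s)" for s
  proof -
    have "M \<union> {1..Suc s} = insert (Suc s) (M \<union> {1..s})" by auto
    then show ?thesis using fM by (simp add: g_def card_insert_if)
  qed
  obtain s where s: "s \<le> n" "g s = card C" using ivt_nat[of g "card C" n, OF g0 gn gs] by blast
  define B where "B = M \<union> {1..s}"
  have fBB: "finite B" using fM by (simp add: B_def)
  have cB: "card B = card C" using s by (simp add: B_def g_def)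
  have Bn: "B \<subseteq> {1..n}" using MS assms(2) s by (auto simp: B_def)
  have cnt: "card {x\<in>B. t \<le> x} \<le> card {x\<in>C. t \<le> x}" for t
  proof (cases "s < t")
    case True
    have "{x\<in>B. t \<le> x} \<subseteq> val ` {i\<in>U. t \<le> i}"
    proof
      fix x assume "x \<in> {x\<in>B. t \<le> x}"
      then have "x \<in> M" "t \<le> x" using True by (auto simp: B_def)
      then obtain i where "i \<in> U" "x = val i" "t \<le> x" by (auto simp: M_def)
      then show "x \<in> val ` {i\<in>U. t \<le> i}" using vp(3)[of i] by (intro rev_image_eqI[of i]) auto
    qed
    then have "card {x\<in>B. t \<le> x} \<le> card (val ` {i\<in>U. t \<le> i})"
      by (rule card_mono[rotated]) (use fU in simp)
    also have "\<dots> \<le> card {i\<in>U. t \<le> i}" by (rule card_image_le) (use fU in simp)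
    also have "\<dots> \<le> card {x\<in>C. t \<le> x}" by (rule card_mono) (use fC UC in auto)
    finally show ?thesis .
  next
    case False
    have "{1..<t} \<subseteq> {x\<in>B. \<not> t \<le> x}" using False by (auto simp: B_def)
    then have a: "t - 1 \<le> card {x\<in>B. \<not> t \<le> x}"
      using card_mono[OF _ \<open>{1..<t} \<subseteq> _\<close>] fBB by simp
    have "{x\<in>C. \<not> t \<le> x} \<subseteq> {1..<t}" using assms(1) by auto
    then have b: "card {x\<in>C. \<not> t \<le> x} \<le> t - 1"
      using card_mono[OF _ \<open>{x\<in>C. \<not> t \<le> x} \<subseteq> _\<close>] by simp
    show ?thesis using a b card_split[OF fBB, of "\<lambda>x. t \<le> x"]
      card_split[OF fC, of "\<lambda>x. t \<le> x"] cB by linarith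
  qed
  have Bb: "B \<in> schubert_bases n C"
    using Bn gale_count[OF fBB fC cB] cnt by (simp add: schubert_bases_def)
  have "card M \<le> card (S \<inter> B)"
    by (rule card_mono) (use fS MS in \<open>auto simp: B_def\<close>)
  then have eqB: "card (S \<inter> B) = card U" using upper[OF Bb] cM by simp
  have "schubert_rank n C S = card U"
    unfolding schubert_rank_def
    by (rule Max_eqI) (use fB upper Bb eqB in \<open>auto intro: rev_image_eqI\<close>)
  then show ?thesis by (simp add: filling_size_def U_def F_def)
qed

end
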